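(* Let $h(x)$ be a monic irreducible polynomial over $GF(q)$ of degree $m>1$ and order $n$ with $n\ne q^m-1$, and let $J\subseteq A_n$ be the minimal ideal (irreducible cyclic code) with parity-check polynomial $h(x)$. Let $R=(q^m-1)/(q-1)$ and $$d=\gcd(q-1,n),\qquad r=n/d.$$ Then every cycle of $J$ (of a nonzero element) is contained in exactly $r$ proportionality classes, each of which contains exactly $d$ distinct vectors of the cycle; i.e. for every nonzero $z\in J$ one has $d_z=d$ and $r_z=r$. Moreover $1\le r\le R$, $r\mid R$, and $1\le d\le q-1$.
   Context: Let $q>2$ be a prime power. The order $\mathrm{ord}(f)$ of a polynomial $f$ with $f(0)\ne0$ is the least $e\ge1$ with $f\mid x^e-1$; $\gcd(n,q)=1$ holds automatically. $A_n=GF(q)[x]/(x^n-1)$; $J$ is the ideal generated by $(x^n-1)/h(x)$. For nonzero $z\in A_n$: $P_z=\{\alpha z:\alpha\in GF(q)^*\}$ is its proportionality class; $\{z\}=\{x^iz:i\ge0\}$ is its cycle; its period $n_z$ is the least $e\ge1$ with $x^ez=z$ (every nonzero element of $J$ has period $n$); $r_z$ is the least positive integer such that $x^{r_z}z=\alpha z$ for some $\alpha\in GF(q)^*$, and $d_z=n_z/r_z$. *)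

theory Defs
  imports "HOL-Computational_Algebra.Computational_Algebra" "HOL-Library.Cardinality"
begin

definition xn :: "nat \<Rightarrow> 'a::field poly" where
  "xn n = monom 1 n - 1"

definition poly_ord :: "'a::field poly \<Rightarrow> nat" where
  "poly_ord f = (LEAST e. e \<ge> 1 \<and> f dvd xn e)"

text \<open>Elements of A_n = GF(q)[x]/(x^n - 1) are represented by their reduced
  representatives (polynomials of degree < n). The ideal J generated by (x^n-1)/h.\<close>
definition min_ideal :: "nat \<Rightarrow> 'a::field poly \<Rightarrow> 'a poly set" where
  "min_ideal n h = {((xn n div h) * a) mod xn n | a. True}"

definition cycle :: "nat \<Rightarrow> 'a::field poly \<Rightarrow> 'a poly set" where
  "cycle n z = {(monom 1 i * z) mod xn n | i. True}"

definition prop_class :: "'a::field poly \<Rightarrow> 'a poly set" where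
  "prop_class z = {smult \<alpha> z | \<alpha>. \<alpha> \<noteq> 0}"

definition period :: "nat \<Rightarrow> 'a::field poly \<Rightarrow> nat" where
  "period n z = (LEAST e. e \<ge> 1 \<and> (monom 1 e * z) mod xn n = z)"

definition r_of :: "nat \<Rightarrow> 'a::field poly \<Rightarrow> nat" where
  "r_of n z = (LEAST e. e \<ge> 1 \<and> (\<exists>\<alpha>. \<alpha> \<noteq> 0 \<and> (monom 1 e * z) mod xn n = smult \<alpha> z))"

definition d_of :: "nat \<Rightarrow> 'a::field poly \<Rightarrow> nat" where
  "d_of n z = period n z div r_of n z"

end

theory Submission
  imports Defs
begin


lemma monom_mult_monom1: "monom (1::'a::field) a * monom 1 b = monom 1 (a+b)"
  by (simp add: mult_monom)

lemma prime_dvd_prod: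
  fixes p :: "'a::field poly"
  assumes "prime_elem p" "finite A" "p dvd prod f A"
  shows "\<exists>a\<in>A. p dvd f a"
  using assms(2,3)
proof (induction A rule: finite_induct)
  case empty
  then have "p dvd 1" by simp
  then show ?case using assms(1) by (simp add: prime_elem_def)
next
  case (insert x F)
  then have "p dvd f x * prod f F" by simp
  then have "p dvd f x \<or> p dvd prod f F" using assms(1) prime_elem_dvd_mult_iff by blast
  then show ?case
  proof
    assume "p dvd f x" then show ?thesis by blast
  next
    assume "p dvd prod f F" then show ?thesis using insert.IH by blast
  qed
qed

lemma h_not_dvd_monom:
  fixes h :: "'a::field poly"
  assumes "irreducible h" "degree h > 1"
  shows "\<not> h dvd monom 1 i"
proof
  assume a: "h dvd monom 1 i"
  have pr: "prime_elem h" using assms(1) by (rule field_poly_irreducible_imp_prime)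
  have "monom (1::'a) i = [:0,1::'a:] ^ i" using monom_altdef[of "1::'a" i] by (simp only: smult_1_left)
  with a have "h dvd [:0,1::'a:] ^ i" by simp
  then have "h dvd [:0,1::'a:]" using pr prime_elem_dvd_power by blast
  then have "degree h \<le> degree [:0,1::'a:]" by (rule dvd_imp_degree_le) simp
  then show False using assms(2) by simp
qed

lemma h_cancel_monom:
  fixes h :: "'a::field poly"
  assumes "irreducible h" "degree h > 1" "h dvd monom 1 i * p"
  shows "h dvd p"
proof -
  have pr: "prime_elem h" using assms(1) by (rule field_poly_irreducible_imp_prime)
  show ?thesis using assms(3) pr prime_elem_dvd_mult_iff h_not_dvd_monom[OF assms(1,2)] by blast
qed

lemma xn_add: "xn (a+b) = monom (1::'a::field) a * xn b + xn a"
  by (simp add: xn_def algebra_simps monom_mult_monom1)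

lemma xn_sub: "b \<le> a \<Longrightarrow> xn a - xn b = monom (1::'a::field) b * xn (a-b)"
  using xn_add[of b "a-b"] by (simp add: algebra_simps)

lemma xn_mult_dvd: "h dvd xn a \<Longrightarrow> h dvd xn (a * k)"
proof (induction k)
  case 0 then show ?case by (simp add: xn_def)
next
  case (Suc k)
  have eq: "xn (a * Suc k) = monom 1 (a*k) * xn a + xn (a*k)"
    using xn_add[of "a*k" a] by (simp add: add.commute)
  have "h dvd monom 1 (a*k) * xn a + xn (a*k)"
    by (rule dvd_add[OF dvd_mult[OF Suc.prems] Suc.IH[OF Suc.prems]])
  then show ?case by (simp only: eq)
qed

lemma ord_props:
  fixes h :: "'a::field poly"
  assumes irr: "irreducible h" and dg: "degree h > 1" and ex: "N \<ge> 1" "h dvd xn N"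
  shows "poly_ord h \<ge> 1" "h dvd xn (poly_ord h)" "h dvd xn k \<longleftrightarrow> poly_ord h dvd k"
proof -
  let ?P = "\<lambda>e. e \<ge> 1 \<and> h dvd xn e"
  have P: "?P (poly_ord h)" unfolding poly_ord_def by (rule LeastI[of ?P N]) (use ex in auto)
  then show "poly_ord h \<ge> 1" "h dvd xn (poly_ord h)" by auto
  have least: "\<And>e. ?P e \<Longrightarrow> poly_ord h \<le> e" unfolding poly_ord_def by (rule Least_le)
  show "h dvd xn k \<longleftrightarrow> poly_ord h dvd k"
  proof
    assume "poly_ord h dvd k"
    then obtain j where "k = poly_ord h * j" by blast
    then show "h dvd xn k" using xn_mult_dvd P by blast
  next
    assume "h dvd xn k"
    then show "poly_ord h dvd k"
    proof (induction k rule: less_induct)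
      case (less k)
      show ?case
      proof (cases "k = 0")
        case True then show ?thesis by simp
      next
        case False
        then have le: "poly_ord h \<le> k" using least less.prems by simp
        have "h dvd xn k - xn (poly_ord h)" using less.prems P by (simp add: dvd_diff)
        then have "h dvd monom 1 (poly_ord h) * xn (k - poly_ord h)" by (simp only: xn_sub[OF le])
        then have d: "h dvd xn (k - poly_ord h)" by (rule h_cancel_monom[OF irr dg])
        have "k - poly_ord h < k" using P False by simp
        then have "poly_ord h dvd k - poly_ord h" using less.IH d by blast
        then show ?thesis using le by (rule dvd_diffD[OF _ dvd_refl])
      qed
    qed
  qed
qed



lemma fermat_ff:
  fixes c :: "'a::{finite,field}"
  assumes "c \<noteq> 0"
  shows "c ^ (CARD('a) - 1) = 1"
proof -
  let ?A = "UNIV - {0::'a}"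
  have inj: "inj_on (\<lambda>x. c * x) ?A" using assms by (auto simp: inj_on_def)
  have img: "(\<lambda>x. c * x) ` ?A = ?A"
  proof (rule endo_inj_surj)
    show "(\<lambda>x. c * x) ` ?A \<subseteq> ?A" using assms by auto
  qed (use inj in auto)
  have "prod (\<lambda>x. x) ?A = prod (\<lambda>x. x) ((\<lambda>x. c * x) ` ?A)" using img by simp
  also have "\<dots> = prod (\<lambda>x. c * x) ?A" using prod.reindex[OF inj] by simp
  also have "\<dots> = c ^ card ?A * prod (\<lambda>x. x) ?A" by (simp add: prod.distrib)
  finally have e: "1 * prod (\<lambda>x. x) ?A = c ^ card ?A * prod (\<lambda>x. x) ?A" by simp
  have nz: "prod (\<lambda>x. x) ?A \<noteq> 0" by simp
  have "1 = c ^ card ?A" using iffD1[OF mult_right_cancel[OF nz] e] .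
  then have "c ^ card ?A = 1" by simp
  moreover have "card ?A = CARD('a) - 1" by (simp add: card_Diff_singleton)
  ultimately show ?thesis by simp
qed

lemma prod_root_dvd:
  fixes p :: "'a::field poly"
  assumes "finite A" "\<forall>a\<in>A. poly p a = 0" "p \<noteq> 0"
  shows "(\<Prod>a\<in>A. [:-a,1:]) dvd p"
  using assms
proof (induction A arbitrary: p rule: finite_induct)
  case empty then show ?case by simp
next
  case (insert x F)
  have "[:-x,1:] dvd p" using insert.prems poly_eq_0_iff_dvd by blast
  then obtain p' where p': "p = [:-x,1:] * p'" by (elim dvdE)
  have p'nz: "p' \<noteq> 0" using p' insert.prems(2) by auto
  have "\<forall>a\<in>F. poly p' a = 0"
  proof
    fix a assume a: "a \<in> F"
    then have "a \<noteq> x" using insert.hyps(2) by auto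
    moreover have "poly p a = 0" using insert.prems a by auto
    ultimately show "poly p' a = 0" using p' by simp
  qed
  then have "(\<Prod>a\<in>F. [:-a,1:]) dvd p'" using insert.IH p'nz by blast
  then have "[:-x,1:] * (\<Prod>a\<in>F. [:-a,1:]) dvd [:-x,1:] * p'" by (rule mult_dvd_mono[OF dvd_refl])
  then show ?case using insert.hyps p' by simp
qed

lemma prod_roots_identity:
  "(\<Prod>c\<in>UNIV - {0::'a::{finite,field}}. [:-c,1:]) = monom 1 (CARD('a) - 1) - 1"
proof -
  let ?A = "UNIV - {0::'a}"
  let ?P = "\<Prod>c\<in>?A. [:-c,1:]"
  let ?Q = "monom (1::'a) (CARD('a) - 1) - 1"
  have card2: "CARD('a) \<ge> 2"
  proof -
    have "{0::'a, 1} \<subseteq> UNIV" by simp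
    then have "card {0::'a,1} \<le> CARD('a)" by (intro card_mono) auto
    then show ?thesis by simp
  qed
  have degQ: "degree ?Q = CARD('a) - 1"
  proof -
    have "degree (-1 :: 'a poly) < degree (monom (1::'a) (CARD('a)-1))" using card2 by (simp add: degree_monom_eq)
    then have "degree (monom (1::'a) (CARD('a)-1) + - 1) = degree (monom (1::'a) (CARD('a)-1))" by (rule degree_add_eq_left)
    then show ?thesis by (simp add: degree_monom_eq)
  qed
  have Qnz: "?Q \<noteq> 0"
  proof
    assume "?Q = 0" then have "degree ?Q = 0" by simp
    with degQ card2 show False by simp
  qed
  have lcQ: "lead_coeff ?Q = 1" using card2 degQ by (simp add: coeff_diff)
  have roots: "\<forall>a\<in>?A. poly ?Q a = 0" using fermat_ff[where 'a='a] by (simp add: poly_monom)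
  have dv: "?P dvd ?Q" by (rule prod_root_dvd[OF _ roots Qnz]) simp
  have degP: "degree ?P = CARD('a) - 1"
    by (subst degree_prod_eq_sum_degree) (auto simp: card_Diff_singleton)
  have lcP: "lead_coeff ?P = 1" by (simp add: lead_coeff_prod)
  obtain k where k: "?Q = ?P * k" using dv by (elim dvdE)
  have knz: "k \<noteq> 0" using k Qnz by auto
  have Pnz: "?P \<noteq> 0" using lcP by auto
  have "degree ?Q = degree ?P + degree k" using k degree_mult_eq[OF Pnz knz] by simp
  then have "degree k = 0" using degP degQ card2 by simp
  moreover have "lead_coeff k = 1" using k lcP lcQ by (simp add: lead_coeff_mult)
  ultimately have "k = 1" by (elim degree_eq_zeroE) (simp add: one_pCons)
  then show ?thesis using k by simp
qed

lemma pcompose_xpow: "pcompose (monom (1::'a::field) k) y = y ^ k"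
proof (induction k)
  case 0 then show ?case by (simp add: pcompose_1)
next
  case (Suc k)
  have "monom (1::'a) (Suc k) = [:0,1:] * monom 1 k" by (simp add: monom_Suc)
  then show ?case using Suc by (simp add: pcompose_mult pcompose_pCons)
qed

lemma prod_roots_subst:
  fixes y :: "'a::{finite,field} poly"
  shows "(\<Prod>c\<in>UNIV - {0::'a}. y - [:c:]) = y ^ (CARD('a) - 1) - 1"
proof -
  have "pcompose (\<Prod>c\<in>UNIV - {0::'a}. [:-c,1:]) y = pcompose (monom 1 (CARD('a) - 1) - 1) y"
    by (simp only: prod_roots_identity)
  also have "\<dots> = y ^ (CARD('a) - 1) - 1" by (simp add: pcompose_diff pcompose_xpow pcompose_1)
  finally have e: "pcompose (\<Prod>c\<in>UNIV - {0::'a}. [:-c,1:]) y = y ^ (CARD('a) - 1) - 1" .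
  have "pcompose (\<Prod>c\<in>UNIV - {0::'a}. [:-c,1:]) y = (\<Prod>c\<in>UNIV - {0::'a}. y - [:c:])"
    unfolding pcompose_prod by (intro prod.cong refl) (simp add: pcompose_pCons)
  then show ?thesis using e by simp
qed



lemma bounded_polys:
  assumes "m \<ge> 1"
  shows "finite {p::'a::{finite,field} poly. degree p < m}"
    "card {p::'a::{finite,field} poly. degree p < m} = CARD('a) ^ m"
proof -
  let ?L = "{xs::'a list. set xs \<subseteq> UNIV \<and> length xs = m}"
  have fL: "finite ?L" by (rule finite_lists_length_eq) simp
  have cL: "card ?L = CARD('a) ^ m" by (rule card_lists_length_eq) simp
  have inj: "inj_on Poly ?L"
  proof (rule inj_onI)
    fix xs ys assume xs: "xs \<in> ?L" and ys: "ys \<in> ?L" and e: "Poly xs = Poly ys"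
    have "\<forall>i<length xs. xs ! i = ys ! i"
    proof (intro allI impI)
      fix i assume "i < length xs"
      moreover have "coeff (Poly xs) i = coeff (Poly ys) i" using e by simp
      ultimately show "xs ! i = ys ! i" using xs ys by (simp add: nth_default_def)
    qed
    then show "xs = ys" using xs ys by (simp add: list_eq_iff_nth_eq)
  qed
  have img: "Poly ` ?L = {p. degree p < m}"
  proof
    show "Poly ` ?L \<subseteq> {p. degree p < m}"
    proof
      fix p assume "p \<in> Poly ` ?L"
      then obtain xs where xs: "xs \<in> ?L" "p = Poly xs" by blast
      have "degree p \<le> m - 1"
      proof (rule degree_le)
        show "\<forall>i>m - 1. coeff p i = 0" using xs assms by (auto simp: nth_default_def)
      qed
      then show "p \<in> {p. degree p < m}" using assms by simp
    qed
  next
    show "{p. degree p < m} \<subseteq> Poly ` ?L"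
    proof
      fix p :: "'a poly" assume p: "p \<in> {p. degree p < m}"
      let ?xs = "map (coeff p) [0..<m]"
      have "Poly ?xs = p"
      proof (rule poly_eqI)
        fix i
        show "coeff (Poly ?xs) i = coeff p i"
        proof (cases "i < m")
          case True then show ?thesis by (simp add: nth_default_def)
        next
          case False
          then have "coeff p i = 0" using p by (intro coeff_eq_0) simp
          then show ?thesis using False by (simp add: nth_default_def)
        qed
      qed
      moreover have "?xs \<in> ?L" by simp
      ultimately show "p \<in> Poly ` ?L" by (intro image_eqI[where x="?xs"]) auto
    qed
  qed
  have "finite (Poly ` ?L)" using fL by (rule finite_imageI)
  then show "finite {p::'a::{finite,field} poly. degree p < m}" using img by simp
  show "card {p::'a::{finite,field} poly. degree p < m} = CARD('a) ^ m"
    using card_image[OF inj] img cL by simp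
qed

lemma h_dvd_xn_card:
  fixes h :: "'a::{finite,field} poly"
  assumes irr: "irreducible h" and dg: "degree h > 1"
  shows "h dvd xn (CARD('a) ^ degree h - 1)"
proof -
  let ?m = "degree h"
  let ?S = "{p::'a poly. degree p < ?m} - {0}"
  have pr: "prime_elem h" using irr by (rule field_poly_irreducible_imp_prime)
  have hnz: "h \<noteq> 0" using dg by auto
  have fS: "finite ?S" using bounded_polys(1)[of ?m, where 'a='a] dg by simp
  have cS: "card ?S = CARD('a) ^ ?m - 1" using bounded_polys[of ?m, where 'a='a] dg by (simp add: card_Diff_singleton)
  define f where "f = (\<lambda>p::'a poly. (monom 1 1 * p) mod h)"
  have small: "\<And>p. p \<in> ?S \<Longrightarrow> \<not> h dvd p"
  proof
    fix p assume p: "p \<in> ?S" and d: "h dvd p"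
    then have "degree h \<le> degree p" using dvd_imp_degree_le by blast
    then show False using p by simp
  qed
  have fS_sub: "f ` ?S \<subseteq> ?S"
  proof
    fix q assume "q \<in> f ` ?S"
    then obtain p where p: "p \<in> ?S" "q = f p" by blast
    have "\<not> h dvd monom 1 1 * p" using h_cancel_monom[OF irr dg] small[OF p(1)] by blast
    then have nz: "(monom 1 1 * p) mod h \<noteq> 0" by (simp add: dvd_eq_mod_eq_0)
    then have "degree ((monom 1 1 * p) mod h) < ?m" using degree_mod_less'[OF hnz nz] by simp
    then show "q \<in> ?S" using p nz f_def by simp
  qed
  have inj: "inj_on f ?S"
  proof (rule inj_onI)
    fix p p' assume p: "p \<in> ?S" and p': "p' \<in> ?S" and e: "f p = f p'"
    from e have "h dvd monom 1 1 * p - monom 1 1 * p'" unfolding f_def by (rule mod_eq_dvd_iff[THEN iffD1])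
    then have "h dvd monom 1 1 * (p - p')" by (simp add: algebra_simps)
    then have d: "h dvd p - p'" using h_cancel_monom[OF irr dg] by blast
    have "degree (p - p') < ?m" using p p' by (intro degree_diff_less) auto
    have "p - p' = 0"
    proof (rule ccontr)
      assume "p - p' \<noteq> 0"
      then have "degree h \<le> degree (p - p')" using d dvd_imp_degree_le by blast
      then show False using \<open>degree (p - p') < ?m\<close> by simp
    qed
    then show "p = p'" by simp
  qed
  have img: "f ` ?S = ?S" by (rule endo_inj_surj[OF fS fS_sub inj])
  let ?P = "prod (\<lambda>p. p) ?S"
  have "?P = prod (\<lambda>p. p) (f ` ?S)" using img by simp
  also have "\<dots> = prod f ?S" using prod.reindex[OF inj] by simp
  finally have e1: "?P = prod f ?S" .
  have "prod f ?S mod h = prod (\<lambda>p. monom 1 1 * p) ?S mod h"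
    unfolding f_def by (rule mod_prod_eq)
  also have "prod (\<lambda>p. monom 1 1 * p) ?S = monom 1 1 ^ card ?S * ?P"
    by (simp add: prod.distrib)
  also have "monom (1::'a) 1 ^ card ?S = monom 1 (card ?S)" by (simp add: monom_power)
  finally have "?P mod h = (monom 1 (card ?S) * ?P) mod h" using e1 by simp
  then have "h dvd ?P - monom 1 (card ?S) * ?P" by (rule mod_eq_dvd_iff[THEN iffD1])
  moreover have "?P - monom 1 (card ?S) * ?P = - (xn (card ?S) * ?P)" by (simp add: xn_def algebra_simps)
  ultimately have "h dvd xn (card ?S) * ?P" by simp
  moreover have "\<not> h dvd ?P"
  proof
    assume "h dvd ?P"
    then obtain p where "p \<in> ?S" "h dvd p" using prime_dvd_prod[OF pr fS] by blast
    then show False using small by blast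
  qed
  ultimately have "h dvd xn (card ?S)" using pr prime_elem_dvd_mult_iff by blast
  then show ?thesis using cS by simp
qed



lemma dvd_pow_diff: "(x::'a::comm_ring_1) - y dvd x ^ k - y ^ k"
  unfolding power_diff_sumr2 by (rule dvd_triv_left)

lemma const_power_poly: "[:c:] ^ k = [:c ^ k:]"
  by (induction k) (auto simp: one_pCons mult.commute)

lemma xpow_const:
  fixes h :: "'a::{finite,field} poly"
  assumes irr: "irreducible h" and dg: "degree h > 1"
    and ordk: "\<And>k. h dvd xn k \<longleftrightarrow> n dvd k" and n1: "n \<ge> 1"
  shows "(\<exists>\<alpha>. h dvd monom 1 e - [:\<alpha>:]) \<longleftrightarrow> n div gcd (CARD('a) - 1) n dvd e"
proof -
  let ?Q = "CARD('a)"
  define d where "d = gcd (?Q - 1) n"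
  define r where "r = n div d"
  define s where "s = (?Q - 1) div d"
  have dpos: "d > 0" using n1 d_def by simp
  have nr: "n = d * r" unfolding r_def d_def by simp
  have qs: "?Q - 1 = d * s" unfolding s_def d_def by simp
  have "coprime s r" unfolding r_def s_def d_def by (rule div_gcd_coprime) (use n1 in auto)
  then have cop: "coprime r s" by (simp add: coprime_commute)
  have pr: "prime_elem h" using irr by (rule field_poly_irreducible_imp_prime)
  show ?thesis unfolding d_def[symmetric] r_def[symmetric]
  proof
    assume "\<exists>\<alpha>. h dvd monom 1 e - [:\<alpha>:]"
    then obtain \<alpha> where a: "h dvd monom 1 e - [:\<alpha>:]" by blast
    have anz: "\<alpha> \<noteq> 0"
    proof
      assume "\<alpha> = 0"
      then have "h dvd monom 1 e" using a by simp
      then show False using h_not_dvd_monom[OF irr dg] by blast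
    qed
    have "h dvd (monom 1 e) ^ (?Q - 1) - [:\<alpha>:] ^ (?Q - 1)"
      by (rule dvd_trans[OF a dvd_pow_diff])
    moreover have "(monom (1::'a) e) ^ (?Q - 1) = monom 1 (e * (?Q - 1))" by (simp add: monom_power)
    moreover have "[:\<alpha>:] ^ (?Q - 1) = 1" using fermat_ff[OF anz] by (simp add: const_power_poly one_pCons)
    ultimately have "h dvd xn (e * (?Q - 1))" by (simp add: xn_def)
    then have "n dvd e * (?Q - 1)" by (simp only: ordk)
    then have "d * r dvd d * (e * s)" using nr qs by (simp add: ac_simps)
    then have "r dvd e * s" using dpos by simp
    then show "r dvd e" using cop by (simp add: coprime_dvd_mult_left_iff)
  next
    assume "r dvd e"
    then obtain k where ek: "e = r * k" by blast
    have "n dvd r * (?Q - 1)" using nr qs by (simp add: ac_simps)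
    then have "h dvd xn (r * (?Q - 1))" by (simp only: ordk)
    moreover have "xn (r * (?Q - 1)) = (\<Prod>c\<in>UNIV - {0::'a}. monom 1 r - [:c:])"
      by (simp add: prod_roots_subst xn_def monom_power)
    ultimately have "h dvd (\<Prod>c\<in>UNIV - {0::'a}. monom 1 r - [:c:])" by simp
    then have "\<exists>c\<in>UNIV - {0::'a}. h dvd monom 1 r - [:c:]" by (rule prime_dvd_prod[OF pr, rotated]) simp
    then obtain c where c: "h dvd monom 1 r - [:c:]" by blast
    have "h dvd (monom (1::'a) r) ^ k - [:c:] ^ k" by (rule dvd_trans[OF c dvd_pow_diff])
    moreover have "(monom (1::'a) r) ^ k = monom 1 e" using ek by (simp add: monom_power)
    ultimately have "h dvd monom 1 e - [:c ^ k:]" by (simp add: const_power_poly)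
    then show "\<exists>\<alpha>. h dvd monom 1 e - [:\<alpha>:]" by blast
  qed
qed



lemma key_shift:
  fixes h g a N z u v :: "'a::field poly"
  assumes pr: "prime_elem h" and Ng: "N = h * g" and gnz: "g \<noteq> 0" and ha: "\<not> h dvd a"
    and z: "z = (g * a) mod N"
  shows "((u * z) mod N = smult \<alpha> ((v * z) mod N)) \<longleftrightarrow> h dvd u - smult \<alpha> v"
proof -
  have 1: "(u * z) mod N = (u * (g * a)) mod N" unfolding z by (simp add: mod_mult_right_eq)
  have 2: "smult \<alpha> ((v * z) mod N) = (smult \<alpha> (v * (g * a))) mod N"
    unfolding z by (simp add: mod_smult_left mod_mult_right_eq)
  have 3: "u * (g * a) - smult \<alpha> (v * (g * a)) = g * (a * (u - smult \<alpha> v))"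
    by (simp add: algebra_simps)
  have "((u * z) mod N = smult \<alpha> ((v * z) mod N)) \<longleftrightarrow> N dvd u * (g * a) - smult \<alpha> (v * (g * a))"
    unfolding 1 2 by (rule mod_eq_dvd_iff)
  also have "\<dots> \<longleftrightarrow> g * h dvd g * (a * (u - smult \<alpha> v))" unfolding 3 Ng by (simp add: mult.commute)
  also have "\<dots> \<longleftrightarrow> h dvd a * (u - smult \<alpha> v)" using gnz by (rule dvd_times_left_cancel_iff)
  also have "\<dots> \<longleftrightarrow> h dvd u - smult \<alpha> v" using pr ha by (simp add: prime_elem_dvd_mult_iff)
  finally show ?thesis .
qed



lemma cong_count:
  fixes r d i :: nat
  assumes "r > 0"
  shows "card {j. j < r * d \<and> i mod r = j mod r} = d"
proof -
  let ?i0 = "i mod r"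
  have "{j. j < r * d \<and> i mod r = j mod r} = (\<lambda>k. ?i0 + k * r) ` {0..<d}"
  proof
    show "{j. j < r * d \<and> i mod r = j mod r} \<subseteq> (\<lambda>k. ?i0 + k * r) ` {0..<d}"
    proof
      fix j assume j: "j \<in> {j. j < r * d \<and> i mod r = j mod r}"
      then have jm: "j mod r = ?i0" by simp
      have "j = j mod r + (j div r) * r" by simp
      then have e: "j = ?i0 + (j div r) * r" using jm by simp
      have "j < d * r" using j by (simp add: mult.commute)
      then have "j div r < d" by (rule less_mult_imp_div_less)
      then show "j \<in> (\<lambda>k. ?i0 + k * r) ` {0..<d}" using e by (intro image_eqI[where x="j div r"]) auto
    qed
  next
    show "(\<lambda>k. ?i0 + k * r) ` {0..<d} \<subseteq> {j. j < r * d \<and> i mod r = j mod r}"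
    proof
      fix j assume "j \<in> (\<lambda>k. ?i0 + k * r) ` {0..<d}"
      then obtain k where k: "k < d" "j = ?i0 + k * r" by auto
      have "?i0 < r" using assms by simp
      then have "j < r + k * r" using k by simp
      also have "\<dots> = Suc k * r" by simp
      also have "\<dots> \<le> d * r" using k by (intro mult_le_mono1) simp
      also have "\<dots> = r * d" by (simp add: mult.commute)
      finally have "j < r * d" .
      moreover have "i mod r = j mod r" using k by simp
      ultimately show "j \<in> {j. j < r * d \<and> i mod r = j mod r}" by simp
    qed
  qed
  moreover have "inj_on (\<lambda>k. ?i0 + k * r) {0..<d}" using assms by (auto simp: inj_on_def)
  ultimately show ?thesis by (simp add: card_image)
qed

lemma arith_part:
  fixes Q m n :: nat
  assumes Q: "Q > 2" and m: "m \<ge> 1" and n1: "n \<ge> 1" and ndvd: "n dvd Q ^ m - 1"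
  shows "1 \<le> n div gcd (Q - 1) n" "n div gcd (Q - 1) n \<le> (Q ^ m - 1) div (Q - 1)"
    "n div gcd (Q - 1) n dvd (Q ^ m - 1) div (Q - 1)" "1 \<le> gcd (Q - 1) n" "gcd (Q - 1) n \<le> Q - 1"
proof -
  define d where "d = gcd (Q - 1) n"
  define r where "r = n div d"
  define s where "s = (Q - 1) div d"
  define R where "R = (Q ^ m - 1) div (Q - 1)"
  have dpos: "d > 0" using n1 d_def by simp
  have nr: "n = d * r" unfolding r_def d_def by simp
  have qs: "Q - 1 = d * s" unfolding s_def d_def by simp
  have "coprime s r" unfolding r_def s_def d_def by (rule div_gcd_coprime) (use n1 in auto)
  then have cop: "coprime r s" by (simp add: coprime_commute)
  have "int Q - 1 dvd int Q ^ m - 1 ^ m" by (rule dvd_pow_diff)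
  moreover have "int Q ^ m \<ge> 1" using Q by simp
  ultimately have "int (Q - 1) dvd int (Q ^ m - 1)" using Q by (simp add: of_nat_diff)
  then have "Q - 1 dvd Q ^ m - 1" by (simp only: int_dvd_int_iff)
  then have QR: "Q ^ m - 1 = (Q - 1) * R" unfolding R_def by simp
  have "Q ^ m \<ge> Q ^ 1" using Q m by (intro power_increasing) auto
  then have Qm: "Q ^ m - 1 > 0" using Q by simp
  then have Rpos: "R > 0" using QR by (metis gr0I mult_0_right less_irrefl)
  have "d * r dvd d * (s * R)" using ndvd nr qs QR by (simp add: ac_simps)
  then have "r dvd s * R" using dpos by simp
  then have rR: "r dvd R" using cop by (simp add: coprime_dvd_mult_right_iff)
  have rpos: "r \<ge> 1" using nr n1 by (cases r) auto
  show "1 \<le> n div gcd (Q - 1) n" using rpos unfolding r_def d_def .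
  show "n div gcd (Q - 1) n dvd (Q ^ m - 1) div (Q - 1)" using rR unfolding r_def d_def R_def .
  show "n div gcd (Q - 1) n \<le> (Q ^ m - 1) div (Q - 1)" using dvd_imp_le[OF rR Rpos] unfolding r_def d_def R_def .
  show "1 \<le> gcd (Q - 1) n" using dpos unfolding d_def by linarith
  show "gcd (Q - 1) n \<le> Q - 1" using Q by (intro gcd_le1_nat) simp
qed

theorem theorem2:
  fixes h :: "'a::{finite,field} poly" and m n :: nat
  assumes q_gt2: "CARD('a) > 2"
    and monic: "lead_coeff h = 1"
    and irr: "irreducible h"
    and deg: "degree h = m" and m_gt1: "m > 1"
    and ord: "poly_ord h = n"
    and n_ne: "n \<noteq> CARD('a) ^ m - 1"
  defines "J \<equiv> min_ideal n h"
    and "R \<equiv> (CARD('a) ^ m - 1) div (CARD('a) - 1)"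
    and "d \<equiv> gcd (CARD('a) - 1) n"
    and "r \<equiv> n div gcd (CARD('a) - 1) n"
  shows "(\<forall>z \<in> J. z \<noteq> 0 \<longrightarrow>
            card {prop_class y | y. y \<in> cycle n z} = r
          \<and> (\<forall>y \<in> cycle n z. card (prop_class y \<inter> cycle n z) = d)
          \<and> d_of n z = d \<and> r_of n z = r)
       \<and> 1 \<le> r \<and> r \<le> R \<and> r dvd R \<and> 1 \<le> d \<and> d \<le> CARD('a) - 1"
proof -
  let ?Q = "CARD('a)"
  have dg: "degree h > 1" using deg m_gt1 by simp
  have pr: "prime_elem h" using irr by (rule field_poly_irreducible_imp_prime)
  have "?Q ^ m \<ge> ?Q ^ 1" using q_gt2 m_gt1 by (intro power_increasing) auto
  then have Q1: "?Q ^ m - 1 \<ge> 1" using q_gt2 by simp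
  have hq: "h dvd xn (?Q ^ m - 1)" using h_dvd_xn_card[OF irr dg] deg by simp
  have n1: "n \<ge> 1" using ord_props(1)[OF irr dg Q1 hq] ord by simp
  have hn: "h dvd xn n" using ord_props(2)[OF irr dg Q1 hq] ord by simp
  have ordk: "\<And>k. h dvd xn k \<longleftrightarrow> n dvd k" using ord_props(3)[OF irr dg Q1 hq] ord by simp
  have ndvd: "n dvd ?Q ^ m - 1" using hq ordk by simp
  have C: "\<And>e. (\<exists>\<alpha>. h dvd monom 1 e - [:\<alpha>:]) \<longleftrightarrow> r dvd e"
    using xpow_const[OF irr dg ordk n1] unfolding r_def by simp
  have m1: "m \<ge> 1" using m_gt1 by simp
  note A = arith_part[OF q_gt2 m1 n1 ndvd]
  have rpos: "r \<ge> 1" using A(1) unfolding r_def .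
  have nrd: "n = r * d" unfolding r_def d_def by simp
  define N where "N = (xn n :: 'a poly)"
  define g where "g = N div h"
  have Ng: "N = h * g" unfolding g_def N_def using hn by simp
  have Nnz: "N \<noteq> 0"
  proof
    assume "N = 0"
    then have "coeff N n = 0" by simp
    moreover have "coeff N n = 1" using n1 unfolding N_def xn_def by simp
    ultimately show False by simp
  qed
  have gnz: "g \<noteq> 0" using Ng Nnz by auto
  have main: "card {prop_class y | y. y \<in> cycle n z} = r
          \<and> (\<forall>y \<in> cycle n z. card (prop_class y \<inter> cycle n z) = d)
          \<and> d_of n z = d \<and> r_of n z = r" if zJ: "z \<in> J" and znz: "z \<noteq> 0" for z
  proof -
    obtain a where z: "z = (g * a) mod N"
      using zJ unfolding J_def min_ideal_def g_def N_def by blast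
    have ha: "\<not> h dvd a"
    proof
      assume "h dvd a"
      then obtain b where "a = h * b" by (elim dvdE)
      then have "g * a = N * b" using Ng by (simp add: ac_simps)
      then have "z = 0" using z by simp
      then show False using znz by simp
    qed
    note K = key_shift[OF pr Ng gnz ha z]
    have zN: "z mod N = z" using z by simp
    define y where "y i = (monom 1 i * z) mod N" for i
    have y0: "y 0 = z" unfolding y_def using zN by simp
    have ynz: "y i \<noteq> 0" for i
    proof
      assume "y i = 0"
      then have "(monom 1 i * z) mod N = smult 0 ((1 * z) mod N)" unfolding y_def by simp
      then have "h dvd monom 1 i - smult 0 1" by (rule K[THEN iffD1])
      then show False using h_not_dvd_monom[OF irr dg] by simp
    qed
    have yK: "(y j = smult \<alpha> (y i)) \<longleftrightarrow> h dvd monom 1 j - smult \<alpha> (monom 1 i)" for i j \<alpha>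
      unfolding y_def by (rule K)
    have yeq: "(y j = y i) \<longleftrightarrow> n dvd j - i" if ij: "i \<le> j" for i j
    proof -
      have "(y j = y i) \<longleftrightarrow> h dvd monom 1 j - smult 1 (monom 1 i)" using yK[of j 1 i] by simp
      also have "monom (1::'a) j - smult 1 (monom 1 i) = monom 1 i * xn (j - i)"
        using xn_sub[OF ij, where 'a='a] by (simp add: xn_def)
      also have "h dvd monom 1 i * xn (j - i) \<longleftrightarrow> h dvd xn (j - i)"
      proof
        assume "h dvd monom 1 i * xn (j - i)" then show "h dvd xn (j - i)" by (rule h_cancel_monom[OF irr dg])
      next
        assume "h dvd xn (j - i)" then show "h dvd monom 1 i * xn (j - i)" by (rule dvd_mult)
      qed
      also have "\<dots> \<longleftrightarrow> n dvd j - i" by (rule ordk)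
      finally show ?thesis .
    qed
    have yinj: "inj_on y {0..<n}"
    proof (rule inj_onI)
      fix i j assume i: "i \<in> {0..<n}" and j: "j \<in> {0..<n}" and e: "y i = y j"
      show "i = j"
      proof (rule ccontr)
        assume ne: "i \<noteq> j"
        show False
        proof (cases "i < j")
          case True
          then have "n dvd j - i" using yeq[of i j] e by simp
          moreover have "0 < j - i" "j - i < n" using True j by auto
          ultimately show False using nat_dvd_not_less by blast
        next
          case False
          then have "j < i" using ne by simp
          then have "n dvd i - j" using yeq[of j i] e by simp
          moreover have "0 < i - j" "i - j < n" using \<open>j < i\<close> i by auto
          ultimately show False using nat_dvd_not_less by blast
        qed
      qed
    qed
    have yper: "y i = y (i mod n)" for i
    proof -
      have "i mod n \<le> i" by simp
      moreover have "n dvd i - i mod n" by (simp add: minus_mod_eq_mult_div)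
      ultimately show ?thesis using yeq[of "i mod n" i] by simp
    qed
    have yprop: "(\<exists>\<alpha>. y j = smult \<alpha> (y i)) \<longleftrightarrow> r dvd j - i" if ij: "i \<le> j" for i j
    proof -
      have e: "monom 1 j - smult \<alpha> (monom 1 i) = monom 1 i * (monom 1 (j - i) - [:\<alpha>:])" for \<alpha> :: 'a
      proof -
        have "monom (1::'a) j = monom 1 i * monom 1 (j - i)" using ij by (simp add: monom_mult_monom1)
        moreover have "smult \<alpha> (monom (1::'a) i) = monom 1 i * [:\<alpha>:]" by (simp add: ac_simps)
        ultimately show ?thesis by (simp add: algebra_simps)
      qed
      have "(\<exists>\<alpha>. y j = smult \<alpha> (y i)) \<longleftrightarrow> (\<exists>\<alpha>. h dvd monom 1 i * (monom 1 (j - i) - [:\<alpha>:]))"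
        using yK e by simp
      also have "\<dots> \<longleftrightarrow> (\<exists>\<alpha>. h dvd monom 1 (j - i) - [:\<alpha>:])"
      proof
        assume "\<exists>\<alpha>. h dvd monom 1 i * (monom 1 (j - i) - [:\<alpha>:])"
        then obtain \<alpha> where "h dvd monom 1 i * (monom 1 (j - i) - [:\<alpha>:])" by blast
        then have "h dvd monom 1 (j - i) - [:\<alpha>:]" by (rule h_cancel_monom[OF irr dg])
        then show "\<exists>\<alpha>. h dvd monom 1 (j - i) - [:\<alpha>:]" by blast
      next
        assume "\<exists>\<alpha>. h dvd monom 1 (j - i) - [:\<alpha>:]"
        then obtain \<alpha> where "h dvd monom 1 (j - i) - [:\<alpha>:]" by blast
        then have "h dvd monom 1 i * (monom 1 (j - i) - [:\<alpha>:])" by (rule dvd_mult)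
        then show "\<exists>\<alpha>. h dvd monom 1 i * (monom 1 (j - i) - [:\<alpha>:])" by blast
      qed
      also have "\<dots> \<longleftrightarrow> r dvd j - i" by (rule C)
      finally show ?thesis .
    qed
    have ysym: "(\<exists>\<alpha>. y j = smult \<alpha> (y i)) \<Longrightarrow> (\<exists>\<alpha>. y i = smult \<alpha> (y j))" for i j
    proof -
      assume "\<exists>\<alpha>. y j = smult \<alpha> (y i)"
      then obtain \<alpha> where a: "y j = smult \<alpha> (y i)" by blast
      have "\<alpha> \<noteq> 0" using a ynz[of j] by auto
      then have "y i = smult (inverse \<alpha>) (y j)" using a by simp
      then show ?thesis by blast
    qed
    have yprop2: "(\<exists>\<alpha>. y j = smult \<alpha> (y i)) \<longleftrightarrow> i mod r = j mod r" for i j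
    proof (cases "i \<le> j")
      case True
      then show ?thesis using yprop[OF True] mod_eq_dvd_iff_nat[OF True, of r] by auto
    next
      case False
      then have ji: "j \<le> i" by simp
      have "(\<exists>\<alpha>. y j = smult \<alpha> (y i)) \<longleftrightarrow> (\<exists>\<alpha>. y i = smult \<alpha> (y j))" using ysym by blast
      then show ?thesis using yprop[OF ji] mod_eq_dvd_iff_nat[OF ji, of r] by auto
    qed
    have ymem: "y j \<in> prop_class (y i) \<longleftrightarrow> i mod r = j mod r" for i j
    proof -
      have "y j \<in> prop_class (y i) \<longleftrightarrow> (\<exists>\<alpha>. y j = smult \<alpha> (y i))"
      proof
        assume "y j \<in> prop_class (y i)"
        then show "\<exists>\<alpha>. y j = smult \<alpha> (y i)" unfolding prop_class_def by blast
      next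
        assume "\<exists>\<alpha>. y j = smult \<alpha> (y i)"
        then obtain \<alpha> where a: "y j = smult \<alpha> (y i)" by blast
        have "\<alpha> \<noteq> 0" using a ynz[of j] by auto
        then show "y j \<in> prop_class (y i)" unfolding prop_class_def using a by blast
      qed
      then show ?thesis using yprop2[of j i] by (simp only:)
    qed
    have clsub: "prop_class (y j) \<subseteq> prop_class (y i)" if "i mod r = j mod r" for i j
    proof
      fix x assume "x \<in> prop_class (y j)"
      then obtain \<beta> where b: "\<beta> \<noteq> 0" "x = smult \<beta> (y j)" unfolding prop_class_def by blast
      have "\<exists>\<alpha>. y j = smult \<alpha> (y i)" using yprop2[of j i] that by (simp only:)
      then obtain \<alpha> where a: "y j = smult \<alpha> (y i)" by blast
      have "\<alpha> \<noteq> 0" using a ynz[of j] by auto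
      then have "x = smult (\<beta> * \<alpha>) (y i)" "\<beta> * \<alpha> \<noteq> 0" using a b by auto
      then show "x \<in> prop_class (y i)" unfolding prop_class_def by blast
    qed
    have clEq: "prop_class (y i) = prop_class (y j) \<longleftrightarrow> i mod r = j mod r" for i j
    proof
      assume e: "prop_class (y i) = prop_class (y j)"
      have "y j \<in> prop_class (y j)" unfolding prop_class_def by (intro CollectI exI[of _ 1]) simp
      then have "y j \<in> prop_class (y i)" using e by (simp only:)
      then show "i mod r = j mod r" using ymem[of j i] by (simp only:)
    next
      assume "i mod r = j mod r"
      then show "prop_class (y i) = prop_class (y j)" using clsub[of i j] clsub[of j i] by auto
    qed
    have cyc: "cycle n z = y ` {0..<n}"
    proof -
      have "cycle n z = range y" unfolding cycle_def y_def N_def by auto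
      also have "\<dots> = y ` {0..<n}"
      proof
        show "range y \<subseteq> y ` {0..<n}"
        proof
          fix x assume "x \<in> range y"
          then obtain i where "x = y i" by blast
          then have "x = y (i mod n)" using yper[of i] by (simp only:)
          moreover have "i mod n \<in> {0..<n}" using n1 by simp
          ultimately show "x \<in> y ` {0..<n}" by blast
        qed
      qed auto
      finally show ?thesis .
    qed
    have "r * 1 \<le> r * d" using A(4) unfolding d_def by (intro mult_le_mono2) simp
    then have rn: "r \<le> n" using nrd by simp
    have cls: "{prop_class x | x. x \<in> cycle n z} = (\<lambda>i. prop_class (y i)) ` {0..<r}"
    proof
      show "{prop_class x | x. x \<in> cycle n z} \<subseteq> (\<lambda>i. prop_class (y i)) ` {0..<r}"
      proof
        fix c assume "c \<in> {prop_class x | x. x \<in> cycle n z}"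
        then obtain x where x: "c = prop_class x" "x \<in> cycle n z" by blast
        then obtain i where "x = y i" unfolding cyc by blast
        then have c: "c = prop_class (y i)" using x by simp
        have "prop_class (y i) = prop_class (y (i mod r))" using clEq by simp
        moreover have "i mod r \<in> {0..<r}" using rpos by simp
        ultimately show "c \<in> (\<lambda>i. prop_class (y i)) ` {0..<r}" using c by blast
      qed
    next
      show "(\<lambda>i. prop_class (y i)) ` {0..<r} \<subseteq> {prop_class x | x. x \<in> cycle n z}"
        using cyc rn by auto
    qed
    have clinj: "inj_on (\<lambda>i. prop_class (y i)) {0..<r}"
      by (rule inj_onI) (simp add: clEq)
    have P1: "card {prop_class x | x. x \<in> cycle n z} = r"
      unfolding cls using card_image[OF clinj] by simp
    have P2: "card (prop_class x \<inter> cycle n z) = d" if x: "x \<in> cycle n z" for x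
    proof -
      obtain i where i: "x = y i" using x cyc by blast
      have "prop_class (y i) \<inter> cycle n z = y ` {j. j < r * d \<and> i mod r = j mod r}"
      proof
        show "prop_class (y i) \<inter> cycle n z \<subseteq> y ` {j. j < r * d \<and> i mod r = j mod r}"
        proof
          fix w assume w: "w \<in> prop_class (y i) \<inter> cycle n z"
          then obtain j where j: "j < n" "w = y j" unfolding cyc by auto
          then have "i mod r = j mod r" using w ymem by simp
          then show "w \<in> y ` {j. j < r * d \<and> i mod r = j mod r}" using j nrd by auto
        qed
      next
        show "y ` {j. j < r * d \<and> i mod r = j mod r} \<subseteq> prop_class (y i) \<inter> cycle n z"
        proof
          fix w assume "w \<in> y ` {j. j < r * d \<and> i mod r = j mod r}"
          then obtain j where j: "j < r * d" "i mod r = j mod r" "w = y j" by blast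
          then have "w \<in> prop_class (y i)" using ymem by simp
          moreover have "w \<in> cycle n z" unfolding cyc using j nrd by simp
          ultimately show "w \<in> prop_class (y i) \<inter> cycle n z" by simp
        qed
      qed
      moreover have "inj_on y {j. j < r * d \<and> i mod r = j mod r}"
        by (rule inj_on_subset[OF yinj]) (auto simp: nrd)
      ultimately have "card (prop_class (y i) \<inter> cycle n z) = card {j. j < r * d \<and> i mod r = j mod r}"
        by (simp add: card_image)
      also have "\<dots> = d" using cong_count[of r d i] rpos by simp
      finally show ?thesis using i by simp
    qed
    have per: "period n z = n"
    proof -
      have eq: "((monom 1 e * z) mod xn n = z) \<longleftrightarrow> n dvd e" for e
        using yeq[of 0 e] y0 unfolding y_def N_def by simp
      show ?thesis unfolding period_def eq
        by (rule Least_equality) (use n1 in \<open>auto dest: dvd_imp_le\<close>)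
    qed
    have rz: "r_of n z = r"
    proof -
      have eq: "(\<exists>\<alpha>. \<alpha> \<noteq> 0 \<and> (monom 1 e * z) mod xn n = smult \<alpha> z) \<longleftrightarrow> r dvd e" for e
      proof -
        have "(\<exists>\<alpha>. \<alpha> \<noteq> 0 \<and> (monom 1 e * z) mod xn n = smult \<alpha> z) \<longleftrightarrow> y e \<in> prop_class (y 0)"
          unfolding prop_class_def y_def N_def using y0 unfolding y_def N_def by auto
        also have "\<dots> \<longleftrightarrow> r dvd e" using ymem[of e 0] by (simp add: mod_eq_0_iff_dvd)
        finally show ?thesis .
      qed
      show ?thesis unfolding r_of_def eq
        by (rule Least_equality) (use rpos in \<open>auto dest: dvd_imp_le\<close>)
    qed
    have dz: "d_of n z = d" unfolding d_of_def per rz using nrd rpos by simp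
    show ?thesis using P1 P2 dz rz by simp
  qed
  have B: "1 \<le> r" "r \<le> R" "r dvd R" "1 \<le> d" "d \<le> CARD('a) - 1"
    using A by (simp_all add: r_def d_def R_def)
  show ?thesis
  proof (intro conjI)
    show "\<forall>z\<in>J. z \<noteq> 0 \<longrightarrow> card {prop_class y | y. y \<in> cycle n z} = r
          \<and> (\<forall>y \<in> cycle n z. card (prop_class y \<inter> cycle n z) = d)
          \<and> d_of n z = d \<and> r_of n z = r"
      using main by simp
  qed (use B in simp_all)
qed


end
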